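(* Let $n=4$, let $A$ be an irreducible $4\times 4$ Dickson matrix over $\mathbb{F}_{q^4}$ and let $B$ be a $4\times4$ Dickson matrix such that $A$ and $B$ have equal corresponding principal minors. Then $B$ is diagonally similar to $A$ or to $A^T$.
   Context: A Dickson matrix is the $n\times n$ matrix indexed by $\mathbb{Z}_n$ with $A[i|j]=a_{j-i}^{q^i}$ (indices mod $n$) associated to a $q$-polynomial $\sum_{j=0}^{n-1}a_jx^{q^j}\in\mathbb{F}_{q^n}[x]$. $A$ is reducible if there is a partition $\{\alpha,\beta\}$ of $\mathbb{Z}_n$ into nonempty sets with $A[\alpha|\beta]=0$ (rows $\alpha$, columns $\beta$), irreducible otherwise. Equal corresponding principal minors: $\det A[\alpha|\alpha]=\det B[\alpha|\alpha]$ for all nonempty $\alpha$. Diagonally similar: $B=D^{-1}AD$ with $D$ invertible diagonal. *)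

theory Defs
  imports "Jordan_Normal_Form.Determinant" "Jordan_Normal_Form.DL_Submatrix"
begin

text \<open>Dickson matrix of the q-polynomial sum_{j<n} a_j x^(q^j), indexed by Z_n = {0..<n}:
  entry (i,j) is a_{(j-i) mod n}^(q^i).\<close>
definition dickson_mat :: "nat \<Rightarrow> nat \<Rightarrow> (nat \<Rightarrow> 'a::field) \<Rightarrow> 'a mat" where
  "dickson_mat q n a = mat n n (\<lambda>(i,j). (a ((j + n - i) mod n)) ^ (q ^ i))"

definition is_dickson_mat :: "nat \<Rightarrow> nat \<Rightarrow> 'a::field mat \<Rightarrow> bool" where
  "is_dickson_mat q n A \<longleftrightarrow> (\<exists>a. A = dickson_mat q n a)"

definition reducible_mat :: "nat \<Rightarrow> 'a::zero mat \<Rightarrow> bool" where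
  "reducible_mat n A \<longleftrightarrow> (\<exists>\<alpha> \<beta>. \<alpha> \<union> \<beta> = {0..<n} \<and> \<alpha> \<inter> \<beta> = {} \<and> \<alpha> \<noteq> {} \<and> \<beta> \<noteq> {}
      \<and> (\<forall>i\<in>\<alpha>. \<forall>j\<in>\<beta>. A $$ (i,j) = 0))"

definition irreducible_mat :: "nat \<Rightarrow> 'a::zero mat \<Rightarrow> bool" where
  "irreducible_mat n A \<longleftrightarrow> \<not> reducible_mat n A"

definition equal_principal_minors :: "nat \<Rightarrow> 'a::comm_ring_1 mat \<Rightarrow> 'a mat \<Rightarrow> bool" where
  "equal_principal_minors n A B \<longleftrightarrow>
     (\<forall>\<alpha>. \<alpha> \<subseteq> {0..<n} \<and> \<alpha> \<noteq> {} \<longrightarrow> det (submatrix A \<alpha> \<alpha>) = det (submatrix B \<alpha> \<alpha>))"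

definition diag_similar :: "nat \<Rightarrow> 'a::field mat \<Rightarrow> 'a mat \<Rightarrow> bool" where
  "diag_similar n B A \<longleftrightarrow> (\<exists>D Di. D \<in> carrier_mat n n \<and> Di \<in> carrier_mat n n \<and> diagonal_mat D
      \<and> inverts_mat D Di \<and> inverts_mat Di D \<and> B = Di * A * D)"

end

theory Submission
  imports Defs
begin



lemma det1: assumes "(A::'a::comm_ring_1 mat) \<in> carrier_mat 1 1" shows "det A = A $$ (0,0)"
proof -
  have "det A = (\<Sum>j<1. A $$ (0,j) * cofactor A 0 j)" by (rule laplace_expansion_row[OF assms]) auto
  also have "\<dots> = A $$ (0,0)" unfolding cofactor_def
    using mat_delete_carrier[OF assms, of 0 0] by simp
  finally show ?thesis .
qed

lemma det2: assumes "(A::'a::comm_ring_1 mat) \<in> carrier_mat 2 2"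
  shows "det A = A $$ (0,0) * A $$ (1,1) - A $$ (0,1) * A $$ (1,0)"
proof -
  have "det A = (\<Sum>j<2. A $$ (0,j) * cofactor A 0 j)" by (rule laplace_expansion_row[OF assms]) auto
  also have "\<dots> = A $$ (0,0) * A $$ (1,1) - A $$ (0,1) * A $$ (1,0)" unfolding cofactor_def
    using mat_delete_carrier[OF assms, of 0 0] mat_delete_carrier[OF assms, of 0 1] assms
    by (simp add: numeral_2_eq_2 det1 mat_delete_def)
  finally show ?thesis .
qed

lemma det3: assumes "(A::'a::comm_ring_1 mat) \<in> carrier_mat 3 3"
  shows "det A = A $$ (0,0) * (A $$ (1,1) * A $$ (2,2) - A $$ (1,2) * A $$ (2,1))
   - A $$ (0,1) * (A $$ (1,0) * A $$ (2,2) - A $$ (1,2) * A $$ (2,0))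
   + A $$ (0,2) * (A $$ (1,0) * A $$ (2,1) - A $$ (1,1) * A $$ (2,0))"
proof -
  have "det A = (\<Sum>j<3. A $$ (0,j) * cofactor A 0 j)" by (rule laplace_expansion_row[OF assms]) auto
  also have "\<dots> = A $$ (0,0) * (A $$ (1,1) * A $$ (2,2) - A $$ (1,2) * A $$ (2,1))
   - A $$ (0,1) * (A $$ (1,0) * A $$ (2,2) - A $$ (1,2) * A $$ (2,0))
   + A $$ (0,2) * (A $$ (1,0) * A $$ (2,1) - A $$ (1,1) * A $$ (2,0))" unfolding cofactor_def
    using mat_delete_carrier[OF assms, of 0 0] mat_delete_carrier[OF assms, of 0 1] 
      mat_delete_carrier[OF assms, of 0 2] assms
    apply (simp add: eval_nat_numeral det2 mat_delete_def)
    by (simp add: algebra_simps)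
  finally show ?thesis .
qed

lemma det4: assumes "(A::'a::comm_ring_1 mat) \<in> carrier_mat 4 4"
  shows "det A = 
    A $$ (0,0) * (A $$ (1,1) * (A $$ (2,2) * A $$ (3,3) - A $$ (2,3) * A $$ (3,2))
   - A $$ (1,2) * (A $$ (2,1) * A $$ (3,3) - A $$ (2,3) * A $$ (3,1))
   + A $$ (1,3) * (A $$ (2,1) * A $$ (3,2) - A $$ (2,2) * A $$ (3,1)))
  - A $$ (0,1) * (A $$ (1,0) * (A $$ (2,2) * A $$ (3,3) - A $$ (2,3) * A $$ (3,2))
   - A $$ (1,2) * (A $$ (2,0) * A $$ (3,3) - A $$ (2,3) * A $$ (3,0))
   + A $$ (1,3) * (A $$ (2,0) * A $$ (3,2) - A $$ (2,2) * A $$ (3,0)))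
  + A $$ (0,2) * (A $$ (1,0) * (A $$ (2,1) * A $$ (3,3) - A $$ (2,3) * A $$ (3,1))
   - A $$ (1,1) * (A $$ (2,0) * A $$ (3,3) - A $$ (2,3) * A $$ (3,0))
   + A $$ (1,3) * (A $$ (2,0) * A $$ (3,1) - A $$ (2,1) * A $$ (3,0)))
  - A $$ (0,3) * (A $$ (1,0) * (A $$ (2,1) * A $$ (3,2) - A $$ (2,2) * A $$ (3,1))
   - A $$ (1,1) * (A $$ (2,0) * A $$ (3,2) - A $$ (2,2) * A $$ (3,0))
   + A $$ (1,2) * (A $$ (2,0) * A $$ (3,1) - A $$ (2,1) * A $$ (3,0)))"
proof -
  have "det A = (\<Sum>j<4. A $$ (0,j) * cofactor A 0 j)" by (rule laplace_expansion_row[OF assms]) auto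
  then show ?thesis unfolding cofactor_def
    using mat_delete_carrier[OF assms, of 0 0] mat_delete_carrier[OF assms, of 0 1] 
      mat_delete_carrier[OF assms, of 0 2] mat_delete_carrier[OF assms, of 0 3] assms
    apply (simp add: eval_nat_numeral det3 mat_delete_def)
    by (simp add: algebra_simps)
qed

lemma pick_facts: "pick {0::nat} 0 = 0" "pick {0,1} 0 = 0" "pick {0,1} 1 = 1"
  "pick {0,2} 0 = 0" "pick {0,2} 1 = 2" "pick {0,1,2} 0 = 0" "pick {0,1,2} 1 = 1" "pick {0,1,2} 2 = 2"
  "pick {0,1,2,3} 0 = 0" "pick {0,1,2,3} 1 = 1" "pick {0,1,2,3} 2 = 2" "pick {0,1,2,3} 3 = 3"
proof -
  have h: "\<And>I i k S. i \<in> I \<Longrightarrow> {a\<in>I. a < i} = S \<Longrightarrow> card S = k \<Longrightarrow> pick I k = i"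
    using pick_card_in_set by metis
  show "pick {0::nat} 0 = 0" by (rule h[where S="{}"]) auto
  show "pick {0,1} 0 = 0" by (rule h[where S="{}"]) auto
  show "pick {0,1} 1 = 1" by (rule h[where S="{0}"]) auto
  show "pick {0,2} 0 = 0" by (rule h[where S="{}"]) auto
  show "pick {0,2} 1 = 2" by (rule h[where S="{0}"]) auto
  show "pick {0,1,2} 0 = 0" by (rule h[where S="{}"]) auto
  show "pick {0,1,2} 1 = 1" by (rule h[where S="{0}"]) auto
  show "pick {0,1,2} 2 = 2" by (rule h[where S="{0,1}"]) auto
  show "pick {0,1,2,3} 0 = 0" by (rule h[where S="{}"]) auto
  show "pick {0,1,2,3} 1 = 1" by (rule h[where S="{0}"]) auto
  show "pick {0,1,2,3} 2 = 2" by (rule h[where S="{0,1}"]) auto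
  show "pick {0,1,2,3} 3 = 3" by (rule h[where S="{0,1,2}"]) auto
qed

lemma minors: assumes M: "(M::'a::comm_ring_1 mat) \<in> carrier_mat 4 4"
  shows "det (submatrix M {0} {0}) = M $$ (0,0)"
   "det (submatrix M {0,1} {0,1}) = M $$ (0,0) * M $$ (1,1) - M $$ (0,1) * M $$ (1,0)"
   "det (submatrix M {0,2} {0,2}) = M $$ (0,0) * M $$ (2,2) - M $$ (0,2) * M $$ (2,0)"
   "det (submatrix M {0,1,2} {0,1,2}) = M $$ (0,0) * (M $$ (1,1) * M $$ (2,2) - M $$ (1,2) * M $$ (2,1))
   - M $$ (0,1) * (M $$ (1,0) * M $$ (2,2) - M $$ (1,2) * M $$ (2,0))
   + M $$ (0,2) * (M $$ (1,0) * M $$ (2,1) - M $$ (1,1) * M $$ (2,0))"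
   "submatrix M {0,1,2,3} {0,1,2,3} = M"
proof -
  have dr: "dim_row M = 4" "dim_col M = 4" using M by auto
  have c1: "card {i. i < dim_row M \<and> i \<in> {0::nat}} = 1"
  proof - have e: "{i. i < 4 \<and> i \<in> {0::nat}} = {0::nat}" by auto show ?thesis unfolding dr e by simp qed
  have c2: "card {i. i < dim_row M \<and> i \<in> {0::nat,1}} = 2"
  proof - have e: "{i. i < 4 \<and> i \<in> {0::nat,1}} = {0::nat,1}" by auto show ?thesis unfolding dr e by simp qed
  have c3: "card {i. i < dim_row M \<and> i \<in> {0::nat,2}} = 2"
  proof - have e: "{i. i < 4 \<and> i \<in> {0::nat,2}} = {0::nat,2}" by auto show ?thesis unfolding dr e by simp qed
  have c4: "card {i. i < dim_row M \<and> i \<in> {0::nat,1,2}} = 3"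
  proof - have e: "{i. i < 4 \<and> i \<in> {0::nat,1,2}} = {0::nat,1,2}" by auto show ?thesis unfolding dr e by simp qed
  have c5: "card {i. i < dim_row M \<and> i \<in> {0::nat,1,2,3}} = 4"
  proof - have e: "{i. i < 4 \<and> i \<in> {0::nat,1,2,3}} = {0::nat,1,2,3}" by auto show ?thesis unfolding dr e by simp qed
  note c = c1 c2 c3 c4 c5 c1[unfolded dr, folded dr(2)] c2[unfolded dr, folded dr(2)] 
    c3[unfolded dr, folded dr(2)] c4[unfolded dr, folded dr(2)] c5[unfolded dr, folded dr(2)]
  have s1: "submatrix M {0} {0} \<in> carrier_mat 1 1" unfolding submatrix_def c by auto
  show "det (submatrix M {0} {0}) = M $$ (0,0)" unfolding det1[OF s1] 
    unfolding submatrix_def c by (simp add: pick_facts pick_facts[unfolded One_nat_def numeral_2_eq_2 numeral_3_eq_3] pick_facts[unfolded One_nat_def] del: pick.simps)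
  have s2: "submatrix M {0,1} {0,1} \<in> carrier_mat 2 2" unfolding submatrix_def c by auto
  show "det (submatrix M {0,1} {0,1}) = M $$ (0,0) * M $$ (1,1) - M $$ (0,1) * M $$ (1,0)" 
    unfolding det2[OF s2] unfolding submatrix_def c by (simp add: pick_facts pick_facts[unfolded One_nat_def numeral_2_eq_2 numeral_3_eq_3] pick_facts[unfolded One_nat_def] del: pick.simps)
  have s3: "submatrix M {0,2} {0,2} \<in> carrier_mat 2 2" unfolding submatrix_def c by auto
  show "det (submatrix M {0,2} {0,2}) = M $$ (0,0) * M $$ (2,2) - M $$ (0,2) * M $$ (2,0)" 
    unfolding det2[OF s3] unfolding submatrix_def c by (simp add: pick_facts pick_facts[unfolded One_nat_def numeral_2_eq_2 numeral_3_eq_3] pick_facts[unfolded One_nat_def] del: pick.simps)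
  have s4: "submatrix M {0,1,2} {0,1,2} \<in> carrier_mat 3 3" unfolding submatrix_def c by auto
  show "det (submatrix M {0,1,2} {0,1,2}) = M $$ (0,0) * (M $$ (1,1) * M $$ (2,2) - M $$ (1,2) * M $$ (2,1))
   - M $$ (0,1) * (M $$ (1,0) * M $$ (2,2) - M $$ (1,2) * M $$ (2,0))
   + M $$ (0,2) * (M $$ (1,0) * M $$ (2,1) - M $$ (1,1) * M $$ (2,0))" 
    unfolding det3[OF s4] unfolding submatrix_def c by (simp add: pick_facts pick_facts[unfolded One_nat_def numeral_2_eq_2 numeral_3_eq_3] pick_facts[unfolded One_nat_def] del: pick.simps)
  show "submatrix M {0,1,2,3} {0,1,2,3} = M"
  proof (rule eq_matI)
    show "dim_row (submatrix M {0, 1, 2, 3} {0, 1, 2, 3}) = dim_row M" unfolding submatrix_def c by (simp add: dr)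
    show "dim_col (submatrix M {0, 1, 2, 3} {0, 1, 2, 3}) = dim_col M" unfolding submatrix_def c by (simp add: dr)
    fix i j assume "i < dim_row M" "j < dim_col M"
    then have ij: "i < 4" "j < 4" using M by auto
    have pk: "\<And>i. i<4 \<Longrightarrow> pick {0,1,2,3} i = i"
    proof -
      fix i :: nat assume "i < 4"
      then have "i = 0 \<or> i = 1 \<or> i = 2 \<or> i = 3" by auto
      then show "pick {0,1,2,3} i = i" using pick_facts by auto
    qed
    show "submatrix M {0, 1, 2, 3} {0, 1, 2, 3} $$ (i, j) = M $$ (i, j)" 
      unfolding submatrix_def c using ij by (simp add: pk pk[unfolded One_nat_def] dr del: pick.simps)
  qed
qed




lemma fermat:
  fixes x :: "'a::{finite,field}"
  shows   "x ^ card (UNIV :: 'a set) = x"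
proof (cases "x = 0")
  case False
  have "x * (\<Prod>y\<in>UNIV-{0}. x * y) = x * x ^ (card (UNIV :: 'a set) - 1) * \<Prod>(UNIV-{0})"
    by (simp add: prod.distrib mult_ac)
  also have "x * x ^ (card (UNIV :: 'a set) - 1) = x ^ Suc (card (UNIV :: 'a set) - 1)"
    by (subst power_Suc) auto
  also have "Suc (card (UNIV :: 'a set) - 1) = card (UNIV :: 'a set)"
    using finite_UNIV_card_ge_0[where ?'a = 'a] by simp
  also have "(\<Prod>y\<in>UNIV-{0}. x * y) = (\<Prod>y\<in>UNIV-{0}. y)"
    by (rule prod.reindex_bij_witness[of _ "\<lambda>y. y / x" "\<lambda>y. x * y"]) (use False in auto)
  finally show ?thesis
    by simp
qed (use finite_UNIV_card_ge_0[where ?'a = 'a] in auto)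

lemma root_bound:
  fixes c :: "'a::field"
  assumes "n \<ge> 1"
  shows "card {x. x^n = c} \<le> n"
proof -
  define p where "p = monom (1::'a) n + [:-c:]"
  have dp: "degree p = n" unfolding p_def using assms
    by (subst degree_add_eq_left) (auto simp: degree_monom_eq)
  have "p \<noteq> 0" using dp assms by auto
  have "{x. x^n = c} = {x. poly p x = 0}" unfolding p_def by (auto simp: poly_monom)
  then show ?thesis using card_poly_roots_bound[OF \<open>p \<noteq> 0\<close>] dp by simp
qed

lemma card_q: fixes q :: nat assumes "card (UNIV::'a::{finite,field} set) = q^4" shows "q \<ge> 2"
proof -
  have "card (UNIV::'a set) \<ge> 2" 
  proof -
    have "{0::'a,1} \<subseteq> UNIV" by auto
    then have "card {0::'a,1} \<le> card (UNIV::'a set)" by (rule card_mono[OF finite_UNIV])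
    then show ?thesis by simp
  qed
  then have "q^4 \<ge> 2" using assms by simp
  then show ?thesis 
    by (metis One_nat_def less_2_cases not_le one_power2 power_one power_zero_numeral zero_less_numeral zero_neq_numeral)
qed

lemma hilbert90:
  fixes r :: "'a::{finite,field}"
  assumes card: "card (UNIV::'a set) = q^4" and N: "r * r^q * r^(q^2) * r^(q^3) = 1"
  shows "\<exists>d. d \<noteq> 0 \<and> d^q = r * d"
proof -
  have q2: "q \<ge> 2" using card_q[OF card] .
  define M where "M = 1 + q + q^2 + q^3"
  have qM: "(q-1)*M = q^4 - 1" unfolding M_def using q2
    by (cases q) (auto simp: algebra_simps power_Suc eval_nat_numeral)
  have rM: "r^M = 1" using N unfolding M_def by (simp add: power_add mult.assoc)
  define N1 where "N1 = {x::'a. x^M = 1}"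
  have cN1: "card N1 \<le> M" unfolding N1_def by (rule root_bound) (simp add: M_def)
  define G where "G = (UNIV::'a set) - {0}"
  have cG: "card G = q^4 - 1" unfolding G_def using card by (simp add: card_Diff_subset)
  define g where "g = (\<lambda>d::'a. d^(q-1))"
  have gG: "g ` G \<subseteq> N1"
  proof
    fix y assume "y \<in> g ` G"
    then obtain d where d: "d \<noteq> 0" "y = d^(q-1)" unfolding G_def g_def by auto
    have "q^4 = Suc (q^4 - 1)" using q2 by simp
    then have "d * d^(q^4-1) = d^(q^4)" by (metis power_Suc)
    also have "\<dots> = d" using fermat[of d] card by simp
    finally have "d^(q^4-1) = 1" using d(1) by simp
    moreover have "(d^(q-1))^M = d^((q-1)*M)" by (simp add: power_mult)
    ultimately show "y \<in> N1" unfolding N1_def d(2) qM by simp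
  qed
  have "G \<subseteq> (\<Union>y\<in>g ` G. {d. d^(q-1) = y})" unfolding g_def by auto
  then have "card G \<le> card (\<Union>y\<in>g ` G. {d. d^(q-1) = y})" by (intro card_mono) auto
  also have "\<dots> \<le> (\<Sum>y\<in>g ` G. card {d. d^(q-1) = y})" by (rule card_UN_le) auto
  also have "\<dots> \<le> (\<Sum>y\<in>g ` G. q - 1)" by (intro sum_mono root_bound) (use q2 in auto)
  also have "\<dots> = card (g ` G) * (q-1)" by simp
  finally have "(q-1) * M \<le> (q-1) * card (g ` G)" using cG qM by (simp add: mult.commute)
  then have "M \<le> card (g ` G)" using q2 by simp
  then have "card (g ` G) = card N1" using cN1 card_mono[OF _ gG] by force
  then have "g ` G = N1" using gG by (intro card_subset_eq) auto
  moreover have "r \<in> N1" unfolding N1_def using rM by simp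
  ultimately obtain d where d: "d \<in> G" "r = d^(q-1)" unfolding g_def by auto
  have "q = Suc (q-1)" using q2 by simp
  then have "d^q = d^(q-1) * d" by (metis power_Suc2)
  then show ?thesis using d unfolding G_def by auto
qed




locale frob =
  fixes s :: "'a::field \<Rightarrow> 'a"
  assumes smul: "s (x*y) = s x * s y" and s4: "s (s (s (s x))) = x" and s1: "s 1 = 1" and s0: "s 0 = 0"
begin

lemma s_eq0[simp]: "s x = 0 \<longleftrightarrow> x = 0"
  by (metis s0 s4)

lemma s_inv: "s (inverse x) = inverse (s x)"
proof (cases "x = 0")
  case True then show ?thesis by (simp add: s0)
next
  case False
  then have "s x * s (inverse x) = 1" by (metis smul s1 right_inverse)
  then show ?thesis by (metis inverse_unique)
qed

lemma s_div: "s (x / y) = s x / s y"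
  by (simp add: divide_inverse smul s_inv)

definition N where "N x = x * s x * s (s x) * s (s (s x))"

lemma N_mult: "N (x*y) = N x * N y" unfolding N_def smul by (simp add: ac_simps)
lemma N_div: "N (x/y) = N x / N y" unfolding N_def s_div by (simp add: field_simps)
lemma N_s: "N (s x) = N x" unfolding N_def s4 by (simp add: ac_simps)
lemma N_eq0: "N x = 0 \<longleftrightarrow> x = 0" unfolding N_def by simp

definition OPT1 where "OPT1 a1 a2 a3 b1 b2 b3 \<longleftrightarrow>
  (\<exists>r. N r = 1 \<and> b1 = a1 * r \<and> s b3 * r = s a3 \<and> b2 = a2 * r * s r)"

lemma ratio_alg:
  fixes X Z e e2 :: "'a"
  assumes "X * e2 = 1" "Z * e = 1" "e * e2 = 1"
  shows "X * Z = 1" "e = X"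
proof -
  have "X * Z = X * Z * (e * e2)" using assms(3) by simp
  also have "\<dots> = (Z * e) * (X * e2)" by (simp add: ac_simps)
  finally show "X * Z = 1" using assms by simp
  then have "e = e * (X * Z)" by simp
  also have "\<dots> = X * (Z * e)" by (simp add: ac_simps)
  finally show "e = X" using assms by simp
qed

lemma opt1_Y:
  assumes a1: "a1 \<noteq> 0" and a2: "a2 \<noteq> 0"
    and H1: "a1 * s a3 = b1 * s b3" and H2: "a2 * s (s a2) = b2 * s (s b2)"
    and Y: "b1 * s b1 * s (s b2) = a1 * s a1 * s (s a2)"
  shows "OPT1 a1 a2 a3 b1 b2 b3"
proof -
  define r where "r = b1 / a1"
  define e where "e = b2 / a2"
  have b1: "b1 = a1 * r" using a1 unfolding r_def by simp
  have b2: "b2 = a2 * e" using a2 unfolding e_def by simp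
  have "a1 * s a1 * s (s a2) * (r * s r * s (s e)) = a1 * s a1 * s (s a2) * 1"
    using Y unfolding b1 b2 smul by (simp add: ac_simps)
  then have f1: "r * s r * s (s e) = 1" using a1 a2 by simp
  have "a2 * s (s a2) * (e * s (s e)) = a2 * s (s a2) * 1"
    using H2 unfolding b2 smul by (simp add: ac_simps)
  then have f3: "e * s (s e) = 1" using a2 by simp
  have "s (s (r * s r * s (s e))) = 1" using f1 s1 by simp
  then have f2: "(s (s r) * s (s (s r))) * e = 1" unfolding smul s4 .
  from ratio_alg[OF f1[unfolded mult.assoc[of r], folded mult.assoc] f2 f3]
  have "(r * s r) * (s (s r) * s (s (s r))) = 1" "e = r * s r" by (auto simp: ac_simps)
  then have "N r = 1" unfolding N_def by (simp add: ac_simps)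
  moreover have "s b3 * r = s a3" using H1 a1 unfolding b1 by (simp add: field_simps)
  ultimately show ?thesis unfolding OPT1_def using b1 b2 \<open>e = r * s r\<close> by (auto simp: ac_simps)
qed

lemma opt1_Z:
  assumes a3: "a3 \<noteq> 0" and a2: "a2 \<noteq> 0"
    and H1: "a1 * s a3 = b1 * s b3" and H2: "a2 * s (s a2) = b2 * s (s b2)"
    and Z: "b2 * s b3 * s (s b3) = a2 * s a3 * s (s a3)"
  shows "OPT1 a1 a2 a3 b1 b2 b3"
proof -
  have b3: "b3 \<noteq> 0" using Z a2 a3 by (auto simp: s0)
  define r where "r = s a3 / s b3"
  define e where "e = b2 / a2"
  have sa3: "s a3 = s b3 * r" using b3 unfolding r_def by simp
  have ssa3: "s (s a3) = s (s b3) * s r" by (simp add: sa3 smul)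
  have b2: "b2 = a2 * e" using a2 unfolding e_def by simp
  have "a2 * s b3 * s (s b3) * e = a2 * s b3 * s (s b3) * (r * s r)"
    using Z unfolding b2 ssa3 sa3 by (simp add: ac_simps smul)
  then have er: "e = r * s r" using a2 b3 by simp
  have "a2 * s (s a2) * (e * s (s e)) = a2 * s (s a2) * 1"
    using H2 unfolding b2 smul by (simp add: ac_simps)
  then have f3: "e * s (s e) = 1" using a2 by simp
  then have "N r = 1" unfolding er N_def smul by (simp add: ac_simps)
  moreover have "b1 = a1 * r" using H1 b3 unfolding sa3 by (simp add: field_simps)
  ultimately show ?thesis unfolding OPT1_def using b2 er sa3 by (auto simp: ac_simps)
qed

lemma opt1_N:
  assumes a1: "a1 \<noteq> 0" and a2: "a2 = 0" and b2: "b2 = 0"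
    and H1: "a1 * s a3 = b1 * s b3" and NN: "N b1 = N a1"
  shows "OPT1 a1 a2 a3 b1 b2 b3"
proof -
  define r where "r = b1 / a1"
  have b1: "b1 = a1 * r" using a1 unfolding r_def by simp
  have "N r = 1" using NN a1 unfolding r_def N_div by (simp add: N_eq0)
  moreover have "s b3 * r = s a3" using H1 a1 unfolding b1 by (simp add: field_simps)
  ultimately show ?thesis unfolding OPT1_def using b1 a2 b2 by auto
qed

lemma opt1_N3:
  assumes a3: "a3 \<noteq> 0" and a2: "a2 = 0" and b2: "b2 = 0"
    and H1: "a1 * s a3 = b1 * s b3" and NN: "N b3 = N a3"
  shows "OPT1 a1 a2 a3 b1 b2 b3"
proof -
  have b3: "b3 \<noteq> 0" using NN a3 using N_eq0[of a3] by (auto simp: N_def s0)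
  define r where "r = s a3 / s b3"
  have sa3: "s a3 = s b3 * r" using b3 unfolding r_def by simp
  have "N r = 1" using NN a3 b3 unfolding r_def N_div N_s by (simp add: N_eq0)
  moreover have "b1 = a1 * r" using H1 b3 unfolding sa3 by (simp add: field_simps)
  ultimately show ?thesis unfolding OPT1_def using sa3 a2 b2 by (auto simp: ac_simps)
qed

lemma quad: fixes x y z w :: "'a" assumes "x + y = z + w" "x * y = z * w" shows "z = x \<or> z = y"
proof -
  have "(z - x) * (z - y) = z*z - z*(x+y) + x*y" by (simp add: algebra_simps)
  also have "\<dots> = z*z - z*(z+w) + z*w" using assms by simp
  also have "\<dots> = 0" by (simp add: algebra_simps)
  finally show ?thesis by simp
qed

lemma core_w:
  assumes irr: "a1 \<noteq> 0 \<or> a3 \<noteq> 0" and a2: "a2 \<noteq> 0"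
    and H1: "a1 * s a3 = b1 * s b3" and H2: "a2 * s (s a2) = b2 * s (s b2)"
    and H3: "a1 * s a1 * s (s a2) + a2 * s a3 * s (s a3) = b1 * s b1 * s (s b2) + b2 * s b3 * s (s b3)"
    and YB: "b1 * s b1 * s (s b2) = a1 * s a1 * s (s a2)"
  shows "OPT1 a1 a2 a3 b1 b2 b3"
proof (cases "a1 = 0")
  case False then show ?thesis using opt1_Y a2 H1 H2 YB by blast
next
  case True
  then have "a3 \<noteq> 0" using irr by auto
  moreover have "b2 * s b3 * s (s b3) = a2 * s a3 * s (s a3)" using H3 YB by simp
  ultimately show ?thesis using opt1_Z a2 H1 H2 by blast
qed

lemma core_0:
  assumes irr: "a1 \<noteq> 0 \<or> a3 \<noteq> 0" and a2: "a2 = 0"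
    and H1: "a1 * s a3 = b1 * s b3" and H2: "a2 * s (s a2) = b2 * s (s b2)"
    and H4: "N a1 + N a3 = N b1 + N b3"
    and NB: "N b1 = N a1"
  shows "OPT1 a1 a2 a3 b1 b2 b3"
proof -
  have b2: "b2 = 0" using H2 a2 by simp
  show ?thesis
  proof (cases "a1 = 0")
    case False then show ?thesis using opt1_N a2 b2 H1 NB by blast
  next
    case True
    then have "a3 \<noteq> 0" using irr by auto
    moreover have "N b3 = N a3" using H4 NB by simp
    ultimately show ?thesis using opt1_N3 a2 b2 H1 by blast
  qed
qed

lemma core:
  assumes irr: "a1 \<noteq> 0 \<or> a3 \<noteq> 0"
    and H1: "a1 * s a3 = b1 * s b3" and H2: "a2 * s (s a2) = b2 * s (s b2)"
    and H3: "a1 * s a1 * s (s a2) + a2 * s a3 * s (s a3) = b1 * s b1 * s (s b2) + b2 * s b3 * s (s b3)"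
    and H4: "a2 = 0 \<Longrightarrow> b2 = 0 \<Longrightarrow> N a1 + N a3 = N b1 + N b3"
  shows "OPT1 a1 a2 a3 b1 b2 b3 \<or> OPT1 (s a3) (s (s a2)) (s (s (s a1))) b1 b2 b3"
proof -
  have irr': "s a3 \<noteq> 0 \<or> s (s (s a1)) \<noteq> 0" using irr by auto
  have H1': "s a3 * s (s (s (s a1))) = b1 * s b3" using H1 by (simp add: s4 ac_simps)
  have H2': "s (s a2) * s (s (s (s a2))) = b2 * s (s b2)" using H2 by (simp add: s4 ac_simps)
  show ?thesis
  proof (cases "a2 = 0")
    case False
    have prod: "(a1 * s a1 * s (s a2)) * (a2 * s a3 * s (s a3)) = (b1 * s b1 * s (s b2)) * (b2 * s b3 * s (s b3))"
    proof -
      have "(a1 * s a1 * s (s a2)) * (a2 * s a3 * s (s a3)) = (a1 * s a3) * s (a1 * s a3) * (a2 * s (s a2))"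
        by (simp add: smul ac_simps)
      also have "\<dots> = (b1 * s b3) * s (b1 * s b3) * (b2 * s (s b2))" using H1 H2 by simp
      also have "\<dots> = (b1 * s b1 * s (s b2)) * (b2 * s b3 * s (s b3))" by (simp add: smul ac_simps)
      finally show ?thesis .
    qed
    from quad[OF H3 prod] show ?thesis
    proof
      assume "b1 * s b1 * s (s b2) = a1 * s a1 * s (s a2)"
      then show ?thesis using core_w[OF irr False H1 H2 H3] by blast
    next
      assume YB: "b1 * s b1 * s (s b2) = a2 * s a3 * s (s a3)"
      have a2': "s (s a2) \<noteq> 0" using False by simp
      have H3': "s a3 * s (s a3) * s (s (s (s a2))) + s (s a2) * s (s (s (s a1))) * s (s (s (s (s a1)))) 
         = b1 * s b1 * s (s b2) + b2 * s b3 * s (s b3)" using H3 by (simp add: s4 ac_simps)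
      have YB': "b1 * s b1 * s (s b2) = s a3 * s (s a3) * s (s (s (s a2)))" using YB by (simp add: s4 ac_simps)
      show ?thesis using core_w[OF irr' a2' H1' H2' H3' YB'] by blast
    qed
  next
    case True
    then have b2: "b2 = 0" using H2 by simp
    have "N a1 * N a3 = N b1 * N b3" by (metis H1 N_mult N_s)
    from quad[OF H4[OF True b2] this] show ?thesis
    proof
      assume "N b1 = N a1" then show ?thesis using core_0[OF irr True H1 H2 H4[OF True b2]] by blast
    next
      assume NB: "N b1 = N a3"
      have a2': "s (s a2) = 0" using True by simp
      have H4': "N (s a3) + N (s (s (s a1))) = N b1 + N b3" using H4[OF True b2] by (simp add: N_s ac_simps)
      show ?thesis using core_0[OF irr' a2' H1' H2' H4'] NB by (simp add: N_s)
    qed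
  qed
qed

end



definition dmat :: "nat \<Rightarrow> (nat \<Rightarrow> 'a::field) \<Rightarrow> 'a mat" where
  "dmat n g = mat n n (\<lambda>(i,j). if i = j then g i else 0)"

lemma dmat_left: assumes M: "M \<in> carrier_mat n n" and ij: "i < n" "j < n"
  shows "(dmat n g * M) $$ (i,j) = g i * M $$ (i,j)"
proof -
  have "(dmat n g * M) $$ (i,j) = (\<Sum>k\<in>{0..<n}. (if i = k then g i else 0) * M $$ (k,j))"
    using M ij by (simp add: dmat_def scalar_prod_def)
  also have "\<dots> = (\<Sum>k\<in>{0..<n}. if i = k then g i * M $$ (k,j) else 0)"
    by (rule sum.cong) auto
  also have "\<dots> = g i * M $$ (i,j)" using ij by (simp add: sum.delta)
  finally show ?thesis .
qed

lemma dmat_right: assumes M: "M \<in> carrier_mat n n" and ij: "i < n" "j < n"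
  shows "(M * dmat n g) $$ (i,j) = M $$ (i,j) * g j"
proof -
  have "(M * dmat n g) $$ (i,j) = (\<Sum>k\<in>{0..<n}. M $$ (i,k) * (if k = j then g k else 0))"
    using M ij by (simp add: dmat_def scalar_prod_def)
  also have "\<dots> = (\<Sum>k\<in>{0..<n}. if j = k then M $$ (i,k) * g j else 0)"
    by (rule sum.cong) auto
  also have "\<dots> = M $$ (i,j) * g j" using ij by (simp add: sum.delta)
  finally show ?thesis .
qed

lemma dmat_carrier[simp]: "dmat n g \<in> carrier_mat n n" by (simp add: dmat_def)

lemma dmat_diag: "diagonal_mat (dmat n g)" by (simp add: dmat_def diagonal_mat_def)

lemma dmat_inv: assumes "\<And>i. i < n \<Longrightarrow> g i * h i = 1" shows "inverts_mat (dmat n g) (dmat n h)"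
  unfolding inverts_mat_def
proof (rule eq_matI)
  fix i j assume ij: "i < dim_row (1\<^sub>m (dim_row (dmat n g)))" "j < dim_col (1\<^sub>m (dim_row (dmat n g)))"
  then have ij': "i < n" "j < n" by (auto simp: dmat_def)
  show "(dmat n g * dmat n h) $$ (i, j) = 1\<^sub>m (dim_row (dmat n g)) $$ (i, j)"
    using dmat_left[OF dmat_carrier ij', of g h] ij' assms by (auto simp: dmat_def)
qed (auto simp: dmat_def)

lemma pow_funpow: "(x::'a::monoid_mult) ^ (q ^ i) = ((\<lambda>x. x^q) ^^ i) x"
proof (induction i)
  case (Suc i)
  have "x^(q^Suc i) = (x^(q^i))^q" by (simp only: power_Suc2 power_mult)
  then show ?case using Suc by simp
qed simp

lemma dickson_carrier[simp]: "dickson_mat q n a \<in> carrier_mat n n" by (simp add: dickson_mat_def)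

lemma dickson_index: "i < n \<Longrightarrow> j < n \<Longrightarrow> dickson_mat q n a $$ (i,j) = ((\<lambda>x. x^q) ^^ i) (a ((j + n - i) mod n))"
  by (simp add: dickson_mat_def pow_funpow)

context frob begin

lemma sp_mult: "(s ^^ i) (x*y) = (s ^^ i) x * (s ^^ i) y" by (induction i) (auto simp: smul)
lemma sp_inv: "(s ^^ i) (inverse x) = inverse ((s ^^ i) x)" by (induction i) (auto simp: s_inv)
lemma sp_div: "(s ^^ i) (x/y) = (s ^^ i) x / (s ^^ i) y" by (simp add: divide_inverse sp_mult sp_inv)
lemma sp_nz: "(s ^^ i) x = 0 \<longleftrightarrow> x = 0" by (induction i) auto
lemma s4f: "(s ^^ 4) x = x" by (simp add: numeral_eq_Suc s4)
lemma sp4m: "(s ^^ (4*m)) x = x"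
proof (induction m)
  case (Suc m)
  have "(s ^^ (4*Suc m)) x = (s ^^ 4) ((s ^^ (4*m)) x)" by (metis funpow_add comp_apply mult_Suc_right)
  then show ?case using Suc s4f by simp
qed simp
lemma sp_mod: "(s ^^ i) x = (s ^^ (i mod 4)) x"
proof -
  have "i = i mod 4 + 4 * (i div 4)" by simp
  then have "(s ^^ i) x = (s ^^ (i mod 4)) ((s ^^ (4 * (i div 4))) x)" by (metis funpow_add comp_apply)
  then show ?thesis using sp4m by simp
qed
end




lemma dmat_dims[simp]: "dim_row (dmat n g) = n" "dim_col (dmat n g) = n" by (auto simp: dmat_def)

lemma idx_mod: assumes "i < 4" "j < (4::nat)" shows "(i + (j + 4 - i) mod 4) mod 4 = j"
proof -
  have "i \<in> {0,1,2,3}" "j \<in> {0,1,2,3}" using assms by auto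
  then show ?thesis by auto
qed

lemma sim_from_d:
  fixes a b :: "nat \<Rightarrow> 'a::field"
  assumes fr: "frob (\<lambda>x::'a. x^q)" and d: "d \<noteq> 0"
    and bk: "\<And>k. k < 4 \<Longrightarrow> b k = a k * ((\<lambda>x. x^q)^^k) d / d"
  shows "diag_similar 4 (dickson_mat q 4 b) (dickson_mat q 4 a)"
proof -
  define s where "s = (\<lambda>x::'a. x^q)"
  interpret frob s using fr unfolding s_def .
  define D where "D = dmat 4 (\<lambda>i. (s^^i) d)"
  define Di where "Di = dmat 4 (\<lambda>i. inverse ((s^^i) d))"
  have DDi: "inverts_mat D Di" unfolding D_def Di_def by (rule dmat_inv) (use d sp_nz in auto)
  have DiD: "inverts_mat Di D" unfolding D_def Di_def by (rule dmat_inv) (use d sp_nz in auto)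
  have "dickson_mat q 4 b = Di * dickson_mat q 4 a * D"
  proof (rule eq_matI)
    fix i j assume "i < dim_row (Di * dickson_mat q 4 a * D)" "j < dim_col (Di * dickson_mat q 4 a * D)"
    then have ij: "i < 4" "j < 4" by (auto simp: Di_def D_def)
    define k where "k = (j + 4 - i) mod 4"
    have k: "k < 4" unfolding k_def by simp
    have ik: "(s^^i) ((s^^k) d) = (s^^j) d"
    proof -
      have "(s^^i) ((s^^k) d) = (s^^(i+k)) d" by (simp add: funpow_add)
      also have "\<dots> = (s^^((i+k) mod 4)) d" by (rule sp_mod)
      also have "(i+k) mod 4 = j" unfolding k_def using idx_mod ij by blast
      finally show ?thesis .
    qed
    have "(Di * dickson_mat q 4 a * D) $$ (i,j) = inverse ((s^^i) d) * dickson_mat q 4 a $$ (i,j) * (s^^j) d"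
      unfolding D_def Di_def
      by (subst dmat_right[OF mult_carrier_mat[OF dmat_carrier dickson_carrier] ij]) (simp add: dmat_left[OF dickson_carrier ij])
    also have "\<dots> = inverse ((s^^i) d) * (s^^i) (a k) * (s^^j) d"
      using ij by (simp add: dickson_index s_def k_def)
    also have "\<dots> = (s^^i) (b k)"
    proof -
      have "(s^^i) (b k) = (s^^i) (a k) * (s^^j) d / (s^^i) d"
        unfolding bk[OF k, folded s_def] sp_mult sp_div ik ..
      then show ?thesis using d sp_nz[of i d] by (simp add: field_simps)
    qed
    also have "\<dots> = dickson_mat q 4 b $$ (i,j)"
      using ij by (simp add: dickson_index s_def k_def)
    finally show "dickson_mat q 4 b $$ (i,j) = (Di * dickson_mat q 4 a * D) $$ (i,j)" by simp
  qed (auto simp: D_def Di_def dickson_mat_def)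
  then show ?thesis unfolding diag_similar_def
    using DDi DiD by (intro exI[of _ D] exI[of _ Di]) (auto simp: D_def Di_def dmat_diag)
qed




lemma frob_pow: assumes card: "card (UNIV::'a::{finite,field} set) = q^4"
  shows "frob (\<lambda>x::'a. x^q)"
proof
  have q2: "q \<ge> 2" using card_q[OF card] .
  fix x y :: 'a
  show "(x*y)^q = x^q * y^q" by (simp add: power_mult_distrib)
  show "((((x ^ q) ^ q) ^ q) ^ q) = x"
  proof -
    have "((((x ^ q) ^ q) ^ q) ^ q) = x ^ (q^4)"
      by (simp only: power_mult[symmetric]) (simp add: eval_nat_numeral mult.assoc)
    then show ?thesis using fermat[of x] card by simp
  qed
  show "(1::'a)^q = 1" by simp
  show "(0::'a)^q = 0" using q2 by simp
qed

lemma opt1_sim: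
  fixes a b :: "nat \<Rightarrow> 'a::{finite,field}"
  assumes card: "card (UNIV::'a set) = q^4"
    and opt: "frob.OPT1 (\<lambda>x::'a. x^q) (a 1) (a 2) (a 3) (b 1) (b 2) (b 3)"
    and b0: "b 0 = a 0"
  shows "diag_similar 4 (dickson_mat q 4 b) (dickson_mat q 4 a)"
proof -
  define s where "s = (\<lambda>x::'a. x^q)"
  interpret frob s using frob_pow[OF card] unfolding s_def .
  obtain r where r: "N r = 1" "b 1 = a 1 * r" "s (b 3) * r = s (a 3)" "b 2 = a 2 * r * s r"
    using opt[folded s_def] unfolding OPT1_def by blast
  have "r * r^q * r^(q^2) * r^(q^3) = 1"
  proof -
    have "r^(q^2) = (r^q)^q" by (simp only: power2_eq_square power_mult)
    moreover have "r^(q^3) = ((r^q)^q)^q" by (simp only: power3_eq_cube power_mult)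
    ultimately show ?thesis using r(1)[unfolded N_def, unfolded s_def] by simp
  qed
  from hilbert90[OF card this] obtain d where d: "d \<noteq> 0" "d^q = r * d" by blast
  have sd: "s d = r * d" using d unfolding s_def by simp
  have r0: "r \<noteq> 0"
  proof
    assume "r = 0" then have "N r = 0" using N_eq0 by simp
    with r(1) show False by simp
  qed
  have b3: "b 3 * s (s (s r)) = a 3"
  proof -
    have "s (s (s (s (b 3) * r))) = s (s (s (s (a 3))))" by (simp only: r(3))
    then show ?thesis unfolding smul s4 .
  qed
  show ?thesis
  proof (rule sim_from_d[OF frob_pow[OF card] d(1)])
    fix k :: nat assume "k < 4"
    then have "k \<in> {0,1,2,3}" by auto
    then show "b k = a k * ((\<lambda>x. x^q)^^k) d / d"
    proof (elim insertE)
      assume "k = 0" then show ?thesis using b0 d by simp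
    next
      assume "k = 1" then show ?thesis using r(2) d sd unfolding s_def by simp
    next
      assume k: "k = 2"
      have "((\<lambda>x. x^q)^^k) d = s (s d)" unfolding k s_def by (simp add: numeral_eq_Suc)
      also have "\<dots> = s r * r * d" unfolding sd smul by simp
      finally show ?thesis using r(4) d k by simp
    next
      assume k: "k = 3"
      have "((\<lambda>x. x^q)^^k) d = s (s (s d))" unfolding k s_def by (simp add: numeral_eq_Suc)
      also have "\<dots> = s (s r) * s r * r * d" unfolding sd smul by (simp add: ac_simps)
      finally have e: "((\<lambda>x. x^q)^^k) d = s (s r) * s r * r * d" .
      have "b 3 = b 3 * N r" using r(1) by simp
      also have "\<dots> = (b 3 * s (s (s r))) * (s (s r) * s r * r)" unfolding N_def by (simp add: ac_simps)
      also have "\<dots> = a 3 * (s (s r) * s r * r)" unfolding b3 ..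
      finally show ?thesis using e d k by simp
    qed (simp)
  qed
qed




lemma four_cases: "(k::nat) < 4 \<Longrightarrow> k = 0 \<or> k = 1 \<or> k = 2 \<or> k = 3" by auto

lemma funpow_small: "(f ^^ 0) x = x" "(f ^^ 1) x = f x" "(f ^^ 2) x = f (f x)" "(f ^^ 3) x = f (f (f x))"
  by (simp_all add: numeral_eq_Suc)

lemma dickson_index_s:
  assumes "s = (\<lambda>x::'a::field. x^q)" "i < n" "j < n"
  shows "dickson_mat q n a $$ (i,j) = (s ^^ i) (a ((j + n - i) mod n))"
  using dickson_index[OF assms(2,3)] assms(1) by simp

lemma transpose_dickson:
  fixes a :: "nat \<Rightarrow> 'a::field"
  assumes fr: "frob (\<lambda>x::'a. x^q)" and s: "s = (\<lambda>x::'a. x^q)"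
  shows "transpose_mat (dickson_mat q 4 a) = dickson_mat q 4
    (\<lambda>k. if k = 0 then a 0 else if k = 1 then s (a 3) else if k = 2 then s (s (a 2)) else s (s (s (a 1))))"
    (is "_ = dickson_mat q 4 ?a")
proof -
  interpret frob s using fr s by simp
  show ?thesis
  proof (rule eq_matI)
    fix i j assume "i < dim_row (dickson_mat q 4 ?a)" "j < dim_col (dickson_mat q 4 ?a)"
    then have ij: "i < 4" "j < 4" by (auto simp: dickson_mat_def)
    have "transpose_mat (dickson_mat q 4 a) $$ (i,j) = dickson_mat q 4 a $$ (j,i)"
      using ij by (simp add: dickson_mat_def)
    also have "\<dots> = (s ^^ j) (a ((i + 4 - j) mod 4))" by (rule dickson_index_s[OF s ij(2,1)])
    also have "\<dots> = (s ^^ i) (?a ((j + 4 - i) mod 4))"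
      using four_cases[OF ij(1)] four_cases[OF ij(2)] by (elim disjE; simp add: funpow_small s4)
    also have "\<dots> = dickson_mat q 4 ?a $$ (i,j)" by (rule dickson_index_s[OF s ij, symmetric])
    finally show "transpose_mat (dickson_mat q 4 a) $$ (i,j) = dickson_mat q 4 ?a $$ (i,j)" .
  qed (auto simp: dickson_mat_def)
qed

lemma dickson_entries:
  assumes s: "s = (\<lambda>x::'a::field. x^q)"
  shows "dickson_mat q 4 a $$ (0,0) = a 0"
    "dickson_mat q 4 a $$ (0,1) = a 1"
    "dickson_mat q 4 a $$ (0,2) = a 2"
    "dickson_mat q 4 a $$ (0,3) = a 3"
    "dickson_mat q 4 a $$ (1,0) = s (a 3)"
    "dickson_mat q 4 a $$ (1,1) = s (a 0)"
    "dickson_mat q 4 a $$ (1,2) = s (a 1)"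
    "dickson_mat q 4 a $$ (1,3) = s (a 2)"
    "dickson_mat q 4 a $$ (2,0) = s (s (a 2))"
    "dickson_mat q 4 a $$ (2,1) = s (s (a 3))"
    "dickson_mat q 4 a $$ (2,2) = s (s (a 0))"
    "dickson_mat q 4 a $$ (2,3) = s (s (a 1))"
    "dickson_mat q 4 a $$ (3,0) = s (s (s (a 1)))"
    "dickson_mat q 4 a $$ (3,1) = s (s (s (a 2)))"
    "dickson_mat q 4 a $$ (3,2) = s (s (s (a 3)))"
    "dickson_mat q 4 a $$ (3,3) = s (s (s (a 0)))"
  by (simp_all add: dickson_index_s[OF s] funpow_small)

lemma minors_H:
  fixes a b :: "nat \<Rightarrow> 'a::field"
  assumes s: "s = (\<lambda>x::'a. x^q)" and fr: "frob s"
    and E: "equal_principal_minors 4 (dickson_mat q 4 a) (dickson_mat q 4 b)"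
  shows "b 0 = a 0"
    and "a 1 * s (a 3) = b 1 * s (b 3)"
    and "a 2 * s (s (a 2)) = b 2 * s (s (b 2))"
    and "a 1 * s (a 1) * s (s (a 2)) + a 2 * s (a 3) * s (s (a 3)) = b 1 * s (b 1) * s (s (b 2)) + b 2 * s (b 3) * s (s (b 3))"
    and "a 2 = 0 \<Longrightarrow> b 2 = 0 \<Longrightarrow> frob.N s (a 1) + frob.N s (a 3) = frob.N s (b 1) + frob.N s (b 3)"
proof -
  interpret frob s by (rule fr)
  let ?A = "dickson_mat q 4 a" and ?B = "dickson_mat q 4 b"
  have Em: "\<And>\<alpha>. \<alpha> \<subseteq> {0..<4} \<Longrightarrow> \<alpha> \<noteq> {} \<Longrightarrow> det (submatrix ?A \<alpha> \<alpha>) = det (submatrix ?B \<alpha> \<alpha>)"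
    using E unfolding equal_principal_minors_def by blast
  note eA = dickson_entries[OF s, of a] and eB = dickson_entries[OF s, of b]
  have "det (submatrix ?A {0} {0}) = det (submatrix ?B {0} {0})" by (rule Em) auto
  then show b0: "b 0 = a 0" unfolding minors(1)[OF dickson_carrier] eA eB by simp
  have "det (submatrix ?A {0,1} {0,1}) = det (submatrix ?B {0,1} {0,1})" by (rule Em) auto
  then show H1: "a 1 * s (a 3) = b 1 * s (b 3)" unfolding minors(2)[OF dickson_carrier] eA eB b0 by simp
  have "det (submatrix ?A {0,2} {0,2}) = det (submatrix ?B {0,2} {0,2})" by (rule Em) auto
  then show H2: "a 2 * s (s (a 2)) = b 2 * s (s (b 2))" unfolding minors(3)[OF dickson_carrier] eA eB b0 by simp
  have sH1: "s (a 1) * s (s (a 3)) = s (b 1) * s (s (b 3))" using arg_cong[OF H1, of s] by (simp add: smul)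
  have "det (submatrix ?A {0,1,2} {0,1,2}) = det (submatrix ?B {0,1,2} {0,1,2})" by (rule Em) auto
  then have E3: "a 0 * (s (a 0) * s (s (a 0)) - s (a 1) * s (s (a 3))) -
        a 1 * (s (a 3) * s (s (a 0)) - s (a 1) * s (s (a 2))) +
        a 2 * (s (a 3) * s (s (a 3)) - s (a 0) * s (s (a 2))) =
        a 0 * (s (a 0) * s (s (a 0)) - s (b 1) * s (s (b 3))) -
        b 1 * (s (b 3) * s (s (a 0)) - s (b 1) * s (s (b 2))) +
        b 2 * (s (b 3) * s (s (b 3)) - s (a 0) * s (s (b 2)))"
    unfolding minors(4)[OF dickson_carrier] eA eB b0 .
  show "a 1 * s (a 1) * s (s (a 2)) + a 2 * s (a 3) * s (s (a 3)) = b 1 * s (b 1) * s (s (b 2)) + b 2 * s (b 3) * s (s (b 3))"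
  proof -
    have "(a 0 * (s (a 0) * s (s (a 0)) - s (a 1) * s (s (a 3))) -
        a 1 * (s (a 3) * s (s (a 0)) - s (a 1) * s (s (a 2))) +
        a 2 * (s (a 3) * s (s (a 3)) - s (a 0) * s (s (a 2)))) - (
        a 0 * (s (a 0) * s (s (a 0)) - s (b 1) * s (s (b 3))) -
        b 1 * (s (b 3) * s (s (a 0)) - s (b 1) * s (s (b 2))) +
        b 2 * (s (b 3) * s (s (b 3)) - s (a 0) * s (s (b 2)))) =
      (a 1 * s (a 1) * s (s (a 2)) + a 2 * s (a 3) * s (s (a 3))) - (b 1 * s (b 1) * s (s (b 2)) + b 2 * s (b 3) * s (s (b 3)))
      - a 0 * (s (a 1) * s (s (a 3)) - s (b 1) * s (s (b 3))) - s (s (a 0)) * (a 1 * s (a 3) - b 1 * s (b 3))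
      - s (a 0) * (a 2 * s (s (a 2)) - b 2 * s (s (b 2)))" (is "?L - ?R = _") by (simp add: algebra_simps)
    moreover have "?L - ?R = 0" by (simp only: E3 diff_self)
    ultimately have "(a 1 * s (a 1) * s (s (a 2)) + a 2 * s (a 3) * s (s (a 3))) - (b 1 * s (b 1) * s (s (b 2)) + b 2 * s (b 3) * s (s (b 3))) = 0"
      by (simp only: sH1 H1 H2 diff_self mult_zero_right diff_zero)
    then show ?thesis by simp
  qed
  assume a2: "a 2 = 0" and b2: "b 2 = 0"
  have ssH1: "s (s (a 1)) * s (s (s (a 3))) = s (s (b 1)) * s (s (s (b 3)))" using arg_cong[OF sH1, of s] by (simp add: smul)
  have sssH1: "s (s (s (a 1))) * a 3 = s (s (s (b 1))) * b 3" using arg_cong[OF ssH1, of s] by (simp add: smul s4)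
  have "det (submatrix ?A {0,1,2,3} {0,1,2,3}) = det (submatrix ?B {0,1,2,3} {0,1,2,3})" by (rule Em) auto
  then have "det ?A = det ?B" unfolding minors(5)[OF dickson_carrier] .
  then have E4: "det ?A = det ?B" .
  note E4' = E4[unfolded det4[OF dickson_carrier] eA eB b0 a2 b2]
  have dA: "det ?A = a 0 * s (a 0) * s (s (a 0)) * s (s (s (a 0))) - ((a 1 * s (a 3)) * s (s (a 0)) * s (s (s (a 0))) + (s (a 1) * s (s (a 3))) * a 0 * s (s (s (a 0))) + (s (s (a 1)) * s (s (s (a 3)))) * a 0 * s (a 0) + (s (s (s (a 1))) * a 3) * s (a 0) * s (s (a 0))) + (a 1 * s (a 3)) * (s (s (a 1)) * s (s (s (a 3)))) + (s (a 1) * s (s (a 3))) * (s (s (s (a 1))) * a 3) - (N (a 1) + N (a 3))"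
    unfolding det4[OF dickson_carrier] eA a2 N_def s0 by (simp add: algebra_simps s0)
  have dB: "det ?B = a 0 * s (a 0) * s (s (a 0)) * s (s (s (a 0))) - ((b 1 * s (b 3)) * s (s (a 0)) * s (s (s (a 0))) + (s (b 1) * s (s (b 3))) * a 0 * s (s (s (a 0))) + (s (s (b 1)) * s (s (s (b 3)))) * a 0 * s (a 0) + (s (s (s (b 1))) * b 3) * s (a 0) * s (s (a 0))) + (b 1 * s (b 3)) * (s (s (b 1)) * s (s (s (b 3)))) + (s (b 1) * s (s (b 3))) * (s (s (s (b 1))) * b 3) - (N (b 1) + N (b 3))"
    unfolding det4[OF dickson_carrier] eB b0 b2 N_def s0 by (simp add: algebra_simps s0)
  have e: "- N (a 1) - N (a 3) = - N (b 1) - N (b 3)"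
    using E4 unfolding dA dB H1 sH1 ssH1 sssH1 by simp
  show "N (a 1) + N (a 3) = N (b 1) + N (b 3)"
    using arg_cong[OF e, of uminus] by (simp add: add.commute)
qed




lemma irr_nz:
  fixes a :: "nat \<Rightarrow> 'a::field"
  assumes s: "s = (\<lambda>x::'a. x^q)" and fr: "frob s"
    and irr: "irreducible_mat 4 (dickson_mat q 4 a)"
  shows "a 1 \<noteq> 0 \<or> a 3 \<noteq> 0"
proof (rule ccontr)
  interpret frob s by (rule fr)
  assume "\<not> (a 1 \<noteq> 0 \<or> a 3 \<noteq> 0)"
  then have z: "a 1 = 0" "a 3 = 0" by auto
  note eA = dickson_entries[OF s, of a]
  have u: "{0, 2} \<union> {1, 3} = {0..<4::nat}" by auto
  have i: "{0, 2::nat} \<inter> {1, 3} = {}" by simp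
  have e: "\<forall>i\<in>{0, 2::nat}. \<forall>j\<in>{1, 3}. dickson_mat q 4 a $$ (i, j) = 0"
  proof -
    have "dickson_mat q 4 a $$ (0,1) = 0" "dickson_mat q 4 a $$ (0,3) = 0"
      "dickson_mat q 4 a $$ (2,1) = 0" "dickson_mat q 4 a $$ (2,3) = 0"
      unfolding eA z by (simp_all add: s0)
    then show ?thesis by auto
  qed
  have "{0, 2} \<union> {1, 3} = {0..<4::nat} \<and> {0, 2::nat} \<inter> {1, 3} = {} \<and> {0, 2::nat} \<noteq> {} \<and> {1, 3::nat} \<noteq> {}
      \<and> (\<forall>i\<in>{0, 2::nat}. \<forall>j\<in>{1, 3}. dickson_mat q 4 a $$ (i, j) = 0)"
    using u i e by blast
  then have "reducible_mat 4 (dickson_mat q 4 a)" unfolding reducible_mat_def by blast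
  then show False using irr unfolding irreducible_mat_def by simp
qed

theorem mainTheorem11:
  fixes A B :: "'a::{finite,field} mat" and q :: nat
  assumes "card (UNIV :: 'a set) = q ^ 4"
    and "is_dickson_mat q 4 A" and "irreducible_mat 4 A"
    and "is_dickson_mat q 4 B"
    and "equal_principal_minors 4 A B"
  shows "diag_similar 4 B A \<or> diag_similar 4 B (transpose_mat A)"
proof -
  note card = assms(1)
  obtain a where A: "A = dickson_mat q 4 a" using assms(2) unfolding is_dickson_mat_def by blast
  obtain b where B: "B = dickson_mat q 4 b" using assms(4) unfolding is_dickson_mat_def by blast
  define s where "s = (\<lambda>x::'a. x^q)"
  have fr: "frob s" using frob_pow[OF card] unfolding s_def .
  interpret frob s by (rule fr)
  have irr: "a 1 \<noteq> 0 \<or> a 3 \<noteq> 0" using irr_nz[OF s_def fr] assms(3) unfolding A .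
  note H = minors_H[OF s_def fr assms(5)[unfolded A B]]
  from core[OF irr H(2) H(3) H(4) H(5)]
  show ?thesis
  proof
    assume "OPT1 (a 1) (a 2) (a 3) (b 1) (b 2) (b 3)"
    then have "frob.OPT1 (\<lambda>x::'a. x^q) (a 1) (a 2) (a 3) (b 1) (b 2) (b 3)" unfolding s_def .
    from opt1_sim[OF card this H(1)]
    have "diag_similar 4 (dickson_mat q 4 b) (dickson_mat q 4 a)" .
    then show ?thesis unfolding A B by blast
  next
    assume o2: "OPT1 (s (a 3)) (s (s (a 2))) (s (s (s (a 1)))) (b 1) (b 2) (b 3)"
    define a' :: "nat \<Rightarrow> 'a" where "a' = (\<lambda>k. if k = 0 then a 0 else if k = 1 then s (a 3) else if k = 2 then s (s (a 2)) else s (s (s (a 1))))"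
    have "OPT1 (a' 1) (a' 2) (a' 3) (b 1) (b 2) (b 3)" using o2 unfolding a'_def by simp
    then have o2': "frob.OPT1 (\<lambda>x::'a. x^q) (a' 1) (a' 2) (a' 3) (b 1) (b 2) (b 3)" unfolding s_def .
    have "b 0 = a' 0" using H(1) unfolding a'_def by simp
    from opt1_sim[OF card o2' this]
    have "diag_similar 4 (dickson_mat q 4 b) (dickson_mat q 4 a')" .
    moreover have "transpose_mat (dickson_mat q 4 a) = dickson_mat q 4 a'"
      unfolding a'_def by (rule transpose_dickson[OF frob_pow[OF card] s_def])
    ultimately show ?thesis unfolding A B by simp
  qed
qed



end
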